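(* Let $\mathcal A$ be a strongly regular bi-sequence of length $k$, let $\sigma,\omega\in S_k$ with $\sigma_0(\mathcal A)\le\sigma\le\omega$, and let $m\ge1$. Then \[ c\big(r_m(\sigma),r_m(\omega),\mathcal A^m\big)=m^2\big(\ell(\omega)-\ell(\sigma)\big), \] where $c(\sigma',\omega',\mathcal B)=\dim\mathcal O_{\mathfrak M_{\sigma'}(\mathcal B)}-\dim\mathcal O_{\mathfrak M_{\omega'}(\mathcal B)}$.
   Context: A segment is a pair $[a,b]$ of integers with $a\le b$; a multisegment is a finite formal sum (multiset) of segments. A bi-sequence of length $k$ is $\mathcal A=\begin{pmatrix}a_1&\cdots&a_k\\ b_1&\cdots&b_k\end{pmatrix}$ with integers $a_1\le\cdots\le a_k$, $b_1\ge\cdots\ge b_k$, $a_i\le b_{k+1-i}+1$. It is regular if the $a_i$ are pairwise distinct and the $b_i$ are pairwise distinct, strongly regular if moreover $\{a_i\}\cap\{b_j+1\}=\emptyset$. $\sigma_0(\mathcal A)$ is defined recursively for $i=k,\dots,1$ by $\sigma_0^{-1}(i)=\max\{j\notin\sigma_0^{-1}(\{i+1,\dots,k\}):a_j\le b_i+1\}$; for $\sigma\ge\sigma_0(\mathcal A)$ (Bruhat order) one has $a_i\le b_{\sigma(i)}+1$ for all $i$, and $\mathfrak M_\sigma(\mathcal A)=\sum_{i=1}^k[a_i,b_{\sigma(i)}]$, where $[b+1,b]$ is regarded as empty. $\mathcal A^m$ is the bi-sequence of length $mk$ obtained by repeating each entry of $\mathcal A$ $m$ times consecutively (in both rows). $W_m=S_m^k\subset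 S_{mk}$ is the block parabolic subgroup, $r_m:S_k\to N_{S_{mk}}(W_m)/W_m$ the block-permutation isomorphism; $\mathfrak M_{r_m(x)}(\mathcal A^m)$ is well defined and equals $m\cdot\mathfrak M_x(\mathcal A)$. For a multisegment $\mathfrak M$, $\mathcal O_{\mathfrak M}$ denotes the corresponding orbit of $\prod_j GL(V_j)$ acting by conjugation on the space of endomorphisms $x$ of a graded vector space $V=\oplus_{j\in\mathbb Z}V_j$ with $xV_j\subset V_{j-1}$: namely the orbit of the operator which is a direct sum, over the segments $[a,b]$ of $\mathfrak M$, of a Jordan chain $e_b\mapsto e_{b-1}\mapsto\cdots\mapsto e_a\mapsto0$ with $e_j\in V_j$. *)

theory Defs
  imports Complex_Main "HOL-Library.Multiset" "HOL-Library.Function_Algebras" "HOL-Combinatorics.Permutations" "HOL-Combinatorics.Transposition"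
begin

text \<open>Bi-sequences of length k are given by two functions a b :: nat => int on the
  index set {0..<k} (0-indexed: entry i of the paper is index i-1 here).\<close>

definition biseq :: "(nat \<Rightarrow> int) \<Rightarrow> (nat \<Rightarrow> int) \<Rightarrow> nat \<Rightarrow> bool" where
  "biseq a b k \<longleftrightarrow>
     (\<forall>i j. i \<le> j \<and> j < k \<longrightarrow> a i \<le> a j) \<and>
     (\<forall>i j. i \<le> j \<and> j < k \<longrightarrow> b j \<le> b i) \<and>
     (\<forall>i<k. a i \<le> b (k - 1 - i) + 1)"

definition regular_biseq :: "(nat \<Rightarrow> int) \<Rightarrow> (nat \<Rightarrow> int) \<Rightarrow> nat \<Rightarrow> bool" where
  "regular_biseq a b k \<longleftrightarrow> biseq a b k \<and> inj_on a {..<k} \<and> inj_on b {..<k}"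

definition strongly_regular_biseq :: "(nat \<Rightarrow> int) \<Rightarrow> (nat \<Rightarrow> int) \<Rightarrow> nat \<Rightarrow> bool" where
  "strongly_regular_biseq a b k \<longleftrightarrow> regular_biseq a b k \<and>
     (\<forall>i<k. \<forall>j<k. a i \<noteq> b j + 1)"

text \<open>Construction of sigma_0: sel a b k n is the list
  [sigma_0^{-1}(k-1), ..., sigma_0^{-1}(k-n)] (0-indexed).\<close>

fun sel :: "(nat \<Rightarrow> int) \<Rightarrow> (nat \<Rightarrow> int) \<Rightarrow> nat \<Rightarrow> nat \<Rightarrow> nat list" where
  "sel a b k 0 = []"
| "sel a b k (Suc n) =
     (let L = sel a b k n; i = k - Suc n
      in L @ [Max {j. j < k \<and> j \<notin> set L \<and> a j \<le> b i + 1}])"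

definition sigma0_inv :: "(nat \<Rightarrow> int) \<Rightarrow> (nat \<Rightarrow> int) \<Rightarrow> nat \<Rightarrow> nat \<Rightarrow> nat" where
  "sigma0_inv a b k i = (if i < k then sel a b k k ! (k - 1 - i) else i)"

definition sigma0 :: "(nat \<Rightarrow> int) \<Rightarrow> (nat \<Rightarrow> int) \<Rightarrow> nat \<Rightarrow> nat \<Rightarrow> nat" where
  "sigma0 a b k j = (if j < k then (THE i. i < k \<and> sigma0_inv a b k i = j) else j)"

definition perm_length :: "nat \<Rightarrow> (nat \<Rightarrow> nat) \<Rightarrow> nat" where
  "perm_length k x = card {(i, j). i < j \<and> j < k \<and> x j < x i}"

definition bruhat_step :: "nat \<Rightarrow> ((nat \<Rightarrow> nat) \<times> (nat \<Rightarrow> nat)) set" where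
  "bruhat_step k = {(x, x \<circ> transpose i j) | x i j.
      x permutes {..<k} \<and> i < k \<and> j < k \<and> i \<noteq> j \<and>
      perm_length k x < perm_length k (x \<circ> transpose i j)}"

definition bruhat_le :: "nat \<Rightarrow> (nat \<Rightarrow> nat) \<Rightarrow> (nat \<Rightarrow> nat) \<Rightarrow> bool" where
  "bruhat_le k x y \<longleftrightarrow> (x, y) \<in> (bruhat_step k)\<^sup>*"

text \<open>Multisegments are multisets of pairs (a,b) (the segment [a,b]).
  M_sigma(A) = sum_i [a_i, b_{sigma(i)}], dropping empty segments [b+1,b].\<close>

definition multiseg :: "(nat \<Rightarrow> int) \<Rightarrow> (nat \<Rightarrow> int) \<Rightarrow> nat \<Rightarrow> (nat \<Rightarrow> nat) \<Rightarrow> (int \<times> int) multiset" where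
  "multiseg a b k \<sigma> =
     image_mset (\<lambda>i. (a i, b (\<sigma> i))) (filter_mset (\<lambda>i. a i \<le> b (\<sigma> i)) (mset [0..<k]))"

text \<open>A^m: each entry repeated m times consecutively (length m*k).\<close>

definition rep :: "nat \<Rightarrow> (nat \<Rightarrow> int) \<Rightarrow> nat \<Rightarrow> int" where
  "rep m a i = a (i div m)"

text \<open>r_m(x): the block permutation (a representative of the coset in N(W_m)/W_m).\<close>

definition rm :: "nat \<Rightarrow> (nat \<Rightarrow> nat) \<Rightarrow> nat \<Rightarrow> nat" where
  "rm m x i = m * x (i div m) + i mod m"

text \<open>For a list of segments, V has basis e_(s,j), s a segment index and
  a_s <= j <= b_s, e_(s,j) in V_j; x e_(s,j) = e_(s,j-1) (or 0 if j = a_s).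
  dim O_x = dim prod_j GL(V_j) - dim Stab(x), and Stab(x) is a nonempty Zariski-open
  subset of the centralizer of x in the Lie algebra prod_j End(V_j), so
  dim Stab(x) equals the linear dimension of that centralizer.\<close>

definition seg_idx :: "(int \<times> int) list \<Rightarrow> (nat \<times> int) set" where
  "seg_idx segs = {(s, j). s < length segs \<and> fst (segs ! s) \<le> j \<and> j \<le> snd (segs ! s)}"

definition nil_op :: "(int \<times> int) list \<Rightarrow> (nat \<times> int) \<times> (nat \<times> int) \<Rightarrow> complex" where
  "nil_op segs = (\<lambda>(p, q). if p \<in> seg_idx segs \<and> q \<in> seg_idx segs \<and>
                              fst p = fst q \<and> snd p = snd q - 1 then 1 else 0)"

definition graded_endos :: "(int \<times> int) list \<Rightarrow> ((nat \<times> int) \<times> (nat \<times> int) \<Rightarrow> complex) set" where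
  "graded_endos segs = {Y. \<forall>p q. Y (p, q) \<noteq> 0 \<longrightarrow>
       p \<in> seg_idx segs \<and> q \<in> seg_idx segs \<and> snd p = snd q}"

definition mat_mult :: "(nat \<times> int) set \<Rightarrow> ((nat \<times> int) \<times> (nat \<times> int) \<Rightarrow> complex) \<Rightarrow>
    ((nat \<times> int) \<times> (nat \<times> int) \<Rightarrow> complex) \<Rightarrow> (nat \<times> int) \<times> (nat \<times> int) \<Rightarrow> complex" where
  "mat_mult I Y Z = (\<lambda>(p, q). \<Sum>r\<in>I. Y (p, r) * Z (r, q))"

definition centralizer :: "(int \<times> int) list \<Rightarrow> ((nat \<times> int) \<times> (nat \<times> int) \<Rightarrow> complex) set" where
  "centralizer segs = {Y \<in> graded_endos segs.
      mat_mult (seg_idx segs) Y (nil_op segs) = mat_mult (seg_idx segs) (nil_op segs) Y}"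

definition orbit_dim_list :: "(int \<times> int) list \<Rightarrow> nat" where
  "orbit_dim_list segs =
     card {(p, q). p \<in> seg_idx segs \<and> q \<in> seg_idx segs \<and> snd p = snd q}
     - vector_space.dim (\<lambda>c Y z. c * Y z) (centralizer segs)"

definition orbit_dim :: "(int \<times> int) multiset \<Rightarrow> nat" where
  "orbit_dim M = orbit_dim_list (SOME segs. mset segs = M)"

definition c_val :: "(nat \<Rightarrow> nat) \<Rightarrow> (nat \<Rightarrow> nat) \<Rightarrow> (nat \<Rightarrow> int) \<Rightarrow> (nat \<Rightarrow> int) \<Rightarrow> nat \<Rightarrow> int" where
  "c_val s w a b k = int (orbit_dim (multiseg a b k s)) - int (orbit_dim (multiseg a b k w))"

end

theory Submission
  imports Defs
begin


lemma sum_fun_apply': "(sum f S) x = sum (\<lambda>v. f v x) S"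
  by (induction S rule: infinite_finite_induct) auto

interpretation cvs: vector_space "(\<lambda>c (Y::'a \<Rightarrow> complex) z. c * Y z)"
  by unfold_locales (auto simp: fun_eq_iff algebra_simps)

definition homr :: "int \<times> int \<Rightarrow> int \<times> int \<Rightarrow> bool" where
  "homr x y \<longleftrightarrow> fst y \<le> fst x \<and> fst x \<le> snd y \<and> snd y \<le> snd x"

definition Hset :: "(int \<times> int) list \<Rightarrow> (nat \<times> nat) set" where
  "Hset segs = {(s,t). s < length segs \<and> t < length segs \<and> homr (segs!s) (segs!t)}"

definition Eb :: "(int \<times> int) list \<Rightarrow> nat \<times> nat \<Rightarrow> (nat \<times> int) \<times> (nat \<times> int) \<Rightarrow> complex" where
  "Eb segs st = (\<lambda>(p,q). if fst p = fst st \<and> fst q = snd st \<and> snd p = snd q \<and>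
        fst (segs ! fst st) \<le> snd p \<and> snd p \<le> snd (segs ! snd st) then 1 else 0)"

lemma seg_idx_iff: "(s, j) \<in> seg_idx segs \<longleftrightarrow> s < length segs \<and> fst (segs!s) \<le> j \<and> j \<le> snd (segs!s)"
  by (simp add: seg_idx_def)

lemma finite_seg_idx: "finite (seg_idx segs)"
proof -
  have "seg_idx segs = Sigma {..<length segs} (\<lambda>s. {fst (segs!s)..snd (segs!s)})"
    by (auto simp: seg_idx_def)
  then show ?thesis by simp
qed

lemma mm_right:
  "mat_mult (seg_idx segs) Y (nil_op segs) (p, q) =
    (if q \<in> seg_idx segs \<and> (fst q, snd q - 1) \<in> seg_idx segs then Y (p, (fst q, snd q - 1)) else 0)"
proof -
  let ?I = "seg_idx segs"
  have "mat_mult ?I Y (nil_op segs) (p, q) = (\<Sum>r\<in>?I. Y (p, r) * nil_op segs (r, q))"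
    by (simp add: mat_mult_def)
  also have "\<dots> = (\<Sum>r\<in>?I. if r = (fst q, snd q - 1) then (if q \<in> ?I then Y (p, r) else 0) else 0)"
    by (rule sum.cong) (auto simp: nil_op_def)
  also have "\<dots> = (if (fst q, snd q - 1) \<in> ?I then (if q \<in> ?I then Y (p, (fst q, snd q - 1)) else 0) else 0)"
    by (simp add: sum.delta' finite_seg_idx)
  finally show ?thesis by auto
qed

lemma mm_left:
  "mat_mult (seg_idx segs) (nil_op segs) Y (p, q) =
    (if p \<in> seg_idx segs \<and> (fst p, snd p + 1) \<in> seg_idx segs then Y ((fst p, snd p + 1), q) else 0)"
proof -
  let ?I = "seg_idx segs"
  have "mat_mult ?I (nil_op segs) Y (p, q) = (\<Sum>r\<in>?I. nil_op segs (p, r) * Y (r, q))"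
    by (simp add: mat_mult_def)
  also have "\<dots> = (\<Sum>r\<in>?I. if r = (fst p, snd p + 1) then (if p \<in> ?I then Y (r, q) else 0) else 0)"
    by (rule sum.cong) (auto simp: nil_op_def)
  also have "\<dots> = (if (fst p, snd p + 1) \<in> ?I then (if p \<in> ?I then Y ((fst p, snd p + 1), q) else 0) else 0)"
    by (simp add: sum.delta finite_seg_idx)
  finally show ?thesis by auto
qed

lemma centralizer_iff:
  "Y \<in> centralizer segs \<longleftrightarrow> Y \<in> graded_endos segs \<and>
    (\<forall>p q. (if q \<in> seg_idx segs \<and> (fst q, snd q - 1) \<in> seg_idx segs then Y (p, (fst q, snd q - 1)) else 0)
     = (if p \<in> seg_idx segs \<and> (fst p, snd p + 1) \<in> seg_idx segs then Y ((fst p, snd p + 1), q) else 0))"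
  by (auto simp: centralizer_def fun_eq_iff mm_left mm_right)

lemma cent_step:
  assumes Y: "Y \<in> centralizer segs" and "s < length segs" "t < length segs"
    and "fst (segs!s) \<le> i" "fst (segs!t) \<le> i" "i + 1 \<le> snd (segs!s)" "i + 1 \<le> snd (segs!t)"
  shows "Y ((s,i),(t,i)) = Y ((s,i+1),(t,i+1))"
proof -
  from Y have "\<forall>p q. (if q \<in> seg_idx segs \<and> (fst q, snd q - 1) \<in> seg_idx segs then Y (p, (fst q, snd q - 1)) else 0)
     = (if p \<in> seg_idx segs \<and> (fst p, snd p + 1) \<in> seg_idx segs then Y ((fst p, snd p + 1), q) else 0)"
    by (simp add: centralizer_iff)
  from spec[OF spec[OF this, of "(s,i)"], of "(t,i+1)"] assms(2-) show ?thesis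
    by (simp add: seg_idx_iff)
qed

lemma cent_const:
  assumes Y: "Y \<in> centralizer segs" and st: "s < length segs" "t < length segs"
  defines "lo \<equiv> max (fst (segs!s)) (fst (segs!t))" and "hi \<equiv> min (snd (segs!s)) (snd (segs!t))"
  assumes j: "lo \<le> j" "j \<le> hi"
  shows "Y ((s,j),(t,j)) = Y ((s,lo),(t,lo))"
proof -
  have "\<forall>n::nat. lo + int n \<le> hi \<longrightarrow> Y ((s,lo + int n),(t,lo + int n)) = Y ((s,lo),(t,lo))"
  proof
    fix n :: nat
    show "lo + int n \<le> hi \<longrightarrow> Y ((s,lo + int n),(t,lo + int n)) = Y ((s,lo),(t,lo))"
    proof (induction n)
      case 0 then show ?case by simp
    next
      case (Suc n)
      show ?case
      proof
        assume h: "lo + int (Suc n) \<le> hi"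
        have "Y ((s,lo + int n),(t,lo + int n)) = Y ((s,lo + int n + 1),(t,lo + int n + 1))"
          using h by (intro cent_step[OF Y st]) (auto simp: lo_def hi_def)
        then show "Y ((s,lo + int (Suc n)),(t,lo + int (Suc n))) = Y ((s,lo),(t,lo))"
          using Suc h by (simp add: ac_simps)
      qed
    qed
  qed
  from spec[OF this, of "nat (j - lo)"] j show ?thesis by simp
qed

lemma cent_zero:
  assumes Y: "Y \<in> centralizer segs" and st: "s < length segs" "t < length segs"
  defines "lo \<equiv> max (fst (segs!s)) (fst (segs!t))" and "hi \<equiv> min (snd (segs!s)) (snd (segs!t))"
  assumes le: "lo \<le> hi" and nh: "\<not> homr (segs!s) (segs!t)"
  shows "Y ((s,lo),(t,lo)) = 0"
proof -
  from Y have C: "\<forall>p q. (if q \<in> seg_idx segs \<and> (fst q, snd q - 1) \<in> seg_idx segs then Y (p, (fst q, snd q - 1)) else 0)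
     = (if p \<in> seg_idx segs \<and> (fst p, snd p + 1) \<in> seg_idx segs then Y ((fst p, snd p + 1), q) else 0)"
    by (simp add: centralizer_iff)
  have "fst (segs!s) < fst (segs!t) \<or> snd (segs!s) < snd (segs!t)"
    using nh le by (auto simp: homr_def lo_def hi_def)
  then show ?thesis
  proof
    assume h: "fst (segs!s) < fst (segs!t)"
    from spec[OF spec[OF C, of "(s,fst (segs!t) - 1)"], of "(t,fst (segs!t))"] h le st
    have "Y ((s, fst (segs!t)), (t, fst (segs!t))) = 0"
      by (auto simp: seg_idx_iff lo_def hi_def split: if_splits)
    then show ?thesis using h by (simp add: lo_def)
  next
    assume h: "snd (segs!s) < snd (segs!t)"
    from spec[OF spec[OF C, of "(s,snd (segs!s))"], of "(t,snd (segs!s) + 1)"] h le st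
    have "Y ((s, snd (segs!s)), (t, snd (segs!s))) = 0"
      by (auto simp: seg_idx_iff lo_def hi_def split: if_splits)
    moreover have "Y ((s, snd (segs!s)), (t, snd (segs!s))) = Y ((s,lo),(t,lo))"
      using cent_const[OF Y st, of "snd (segs!s)"] h le by (simp add: lo_def hi_def)
    ultimately show ?thesis by simp
  qed
qed

lemma Eb_cent:
  assumes "st \<in> Hset segs"
  shows "Eb segs st \<in> centralizer segs"
proof -
  obtain s t where st: "st = (s,t)" by (cases st)
  with assms have h: "s < length segs" "t < length segs" "homr (segs!s) (segs!t)"
    by (auto simp: Hset_def)
  show ?thesis
    unfolding centralizer_iff
  proof
    show "Eb segs st \<in> graded_endos segs"
      using h by (auto simp: graded_endos_def Eb_def st seg_idx_iff homr_def split: if_splits)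
    show "\<forall>p q. (if q \<in> seg_idx segs \<and> (fst q, snd q - 1) \<in> seg_idx segs then Eb segs st (p, (fst q, snd q - 1)) else 0)
     = (if p \<in> seg_idx segs \<and> (fst p, snd p + 1) \<in> seg_idx segs then Eb segs st ((fst p, snd p + 1), q) else 0)"
      using h by (auto simp: Eb_def st seg_idx_iff homr_def)
  qed
qed

lemma finite_Hset: "finite (Hset segs)"
  by (rule finite_subset[of _ "{..<length segs} \<times> {..<length segs}"]) (auto simp: Hset_def)

lemma Eb_sum_apply:
  "(\<Sum>st\<in>Hset segs. f st * Eb segs st (p,q)) =
     (if (fst p, fst q) \<in> Hset segs then f (fst p, fst q) * Eb segs (fst p, fst q) (p,q) else 0)"
proof -
  have "(\<Sum>st\<in>Hset segs. f st * Eb segs st (p,q)) =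
     (\<Sum>st\<in>Hset segs. if st = (fst p, fst q) then f st * Eb segs st (p,q) else 0)"
    by (rule sum.cong) (auto simp: Eb_def)
  also have "\<dots> = (if (fst p, fst q) \<in> Hset segs then f (fst p, fst q) * Eb segs (fst p, fst q) (p,q) else 0)"
    by (simp add: sum.delta' finite_Hset)
  finally show ?thesis .
qed

definition ptH :: "(int \<times> int) list \<Rightarrow> nat \<times> nat \<Rightarrow> (nat \<times> int) \<times> (nat \<times> int)" where
  "ptH segs st = ((fst st, fst (segs ! fst st)), (snd st, fst (segs ! fst st)))"

lemma Eb_pt: "st \<in> Hset segs \<Longrightarrow> Eb segs st (ptH segs st) = 1"
  by (auto simp: Eb_def ptH_def Hset_def homr_def)

lemma Eb_inj: "inj_on (Eb segs) (Hset segs)"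
proof (rule inj_onI)
  fix x y assume x: "x \<in> Hset segs" and y: "y \<in> Hset segs" and e: "Eb segs x = Eb segs y"
  have "Eb segs y (ptH segs x) = 1" using Eb_pt[OF x] e by simp
  then show "x = y" by (auto simp: Eb_def ptH_def prod_eq_iff split: if_splits)
qed

lemma Eb_indep: "cvs.independent (Eb segs ` Hset segs)"
proof -
  have fin: "finite (Eb segs ` Hset segs)" using finite_Hset by simp
  show ?thesis
    unfolding cvs.dependent_finite[OF fin]
  proof
    assume "\<exists>u. (\<exists>v\<in>Eb segs ` Hset segs. u v \<noteq> 0) \<and> (\<Sum>v\<in>Eb segs ` Hset segs. (\<lambda>z. u v * v z)) = 0"
    then obtain c v where z: "(\<Sum>v\<in>Eb segs ` Hset segs. (\<lambda>z. c v * v z)) = 0" and v: "v \<in> Eb segs ` Hset segs"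
      and nz: "c v \<noteq> 0" by blast
    from v obtain st where st: "st \<in> Hset segs" "v = Eb segs st" by auto
    have "(\<Sum>v\<in>Eb segs ` Hset segs. (\<lambda>z. c v * v z)) = (\<Sum>st\<in>Hset segs. (\<lambda>z. c (Eb segs st) * Eb segs st z))"
      by (rule sum.reindex[OF Eb_inj, unfolded comp_def])
    with z have "(\<Sum>st\<in>Hset segs. (\<lambda>z. c (Eb segs st) * Eb segs st z)) (ptH segs st) = 0" by simp
    then have "(\<Sum>st'\<in>Hset segs. c (Eb segs st') * Eb segs st' (ptH segs st)) = 0"
      by (simp add: sum_fun_apply')
    then have "c v = 0"
      using st Eb_pt[OF st(1)] Eb_sum_apply[of "\<lambda>st. c (Eb segs st)" segs "fst (ptH segs st)" "snd (ptH segs st)"]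
      by (simp add: ptH_def split: prod.splits)
    with nz show False by simp
  qed
qed

lemma cent_point:
  assumes Y: "Y \<in> centralizer segs"
  shows "Y (p,q) = (if (fst p, fst q) \<in> Hset segs then Y (ptH segs (fst p, fst q)) * Eb segs (fst p, fst q) (p,q) else 0)"
proof -
  obtain s j t j' where pq: "p = (s,j)" "q = (t,j')" by (cases p, cases q)
  have gr: "Y \<in> graded_endos segs" using Y by (simp add: centralizer_def)
  show ?thesis
  proof (cases "Y (p,q) = 0")
    case False
    with gr have I: "p \<in> seg_idx segs" "q \<in> seg_idx segs" "j = j'"
      by (auto simp: graded_endos_def pq)
    then have st: "s < length segs" "t < length segs"
      and r: "fst (segs!s) \<le> j" "j \<le> snd (segs!s)" "fst (segs!t) \<le> j" "j \<le> snd (segs!t)"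
      by (auto simp: seg_idx_iff pq)
    have c: "Y (p,q) = Y ((s, max (fst (segs!s)) (fst (segs!t))), (t, max (fst (segs!s)) (fst (segs!t))))"
      using cent_const[OF Y st, of j] r I by (simp add: pq)
    show ?thesis
    proof (cases "homr (segs!s) (segs!t)")
      case True
      then have "max (fst (segs!s)) (fst (segs!t)) = fst (segs!s)" by (auto simp: homr_def)
      with c True st r show ?thesis
        by (auto simp: Hset_def pq ptH_def Eb_def I homr_def)
    next
      case nh: False
      have "Y ((s, max (fst (segs!s)) (fst (segs!t))), (t, max (fst (segs!s)) (fst (segs!t)))) = 0"
        using cent_zero[OF Y st] nh r by simp
      with c False show ?thesis by simp
    qed
  next
    case True
    show ?thesis
    proof (cases "(s,t) \<in> Hset segs \<and> Eb segs (s,t) (p,q) \<noteq> 0")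
      case False
      then show ?thesis using True by (auto simp: pq)
    next
      case h: True
      then have st: "s < length segs" "t < length segs" and hm: "homr (segs!s) (segs!t)"
        and e: "j = j'" "fst (segs!s) \<le> j" "j \<le> snd (segs!t)"
        by (auto simp: Hset_def Eb_def pq split: if_splits)
      have "Y ((s,j),(t,j)) = Y ((s, max (fst (segs!s)) (fst (segs!t))), (t, max (fst (segs!s)) (fst (segs!t))))"
        using cent_const[OF Y st, of j] e hm by (auto simp: homr_def)
      moreover have "max (fst (segs!s)) (fst (segs!t)) = fst (segs!s)" using hm by (auto simp: homr_def)
      ultimately have "Y (ptH segs (s,t)) = 0" using True by (simp add: ptH_def pq e)
      then show ?thesis using True by (simp add: pq)
    qed
  qed
qed

lemma cent_span: "centralizer segs \<subseteq> cvs.span (Eb segs ` Hset segs)"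
proof
  fix Y assume Y: "Y \<in> centralizer segs"
  have fin: "finite (Eb segs ` Hset segs)" using finite_Hset by simp
  define u where "u = (\<lambda>v. Y (ptH segs (inv_into (Hset segs) (Eb segs) v)))"
  have "(\<Sum>v\<in>Eb segs ` Hset segs. (\<lambda>z. u v * v z)) = (\<Sum>st\<in>Hset segs. (\<lambda>z. u (Eb segs st) * Eb segs st z))"
    by (rule sum.reindex[OF Eb_inj, unfolded comp_def])
  also have "\<dots> = (\<Sum>st\<in>Hset segs. (\<lambda>z. Y (ptH segs st) * Eb segs st z))"
    by (rule sum.cong) (auto simp: u_def inv_into_f_f[OF Eb_inj])
  also have "\<dots> = Y"
  proof
    fix z :: "(nat \<times> int) \<times> (nat \<times> int)"
    obtain p q where z: "z = (p,q)" by (cases z)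
    show "(\<Sum>st\<in>Hset segs. (\<lambda>z. Y (ptH segs st) * Eb segs st z)) z = Y z"
      unfolding sum_fun_apply' z Eb_sum_apply cent_point[OF Y, of p q] ..
  qed
  finally show "Y \<in> cvs.span (Eb segs ` Hset segs)"
    unfolding cvs.span_finite[OF fin] by (metis (no_types, lifting) rangeI)
qed

lemma dim_cent: "vector_space.dim (\<lambda>c Y z. c * Y z) (centralizer segs) = card (Hset segs)"
proof -
  have "card (Eb segs ` Hset segs) = vector_space.dim (\<lambda>c Y z. c * Y z) (centralizer segs)"
    by (rule cvs.basis_card_eq_dim) (use Eb_cent cent_span Eb_indep in auto)
  then show ?thesis using card_image[OF Eb_inj] by simp
qed

definition ov :: "int \<times> int \<Rightarrow> int \<times> int \<Rightarrow> nat" where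
  "ov x y = card ({fst x..snd x} \<inter> {fst y..snd y})"

definition gg :: "int \<times> int \<Rightarrow> int \<times> int \<Rightarrow> int" where
  "gg x y = int (ov x y) - (if homr x y then 1 else 0)"

lemma card_total:
  "card {(p, q). p \<in> seg_idx segs \<and> q \<in> seg_idx segs \<and> snd p = snd q}
    = (\<Sum>s<length segs. \<Sum>t<length segs. ov (segs!s) (segs!t))"
proof -
  let ?L = "{..<length segs}"
  let ?B = "\<lambda>st. {fst (segs!fst st)..snd (segs!fst st)} \<inter> {fst (segs!snd st)..snd (segs!snd st)}"
  let ?f = "\<lambda>((s::nat,t::nat),j::int). ((s,j),(t,j))"
  have eq: "{(p, q). p \<in> seg_idx segs \<and> q \<in> seg_idx segs \<and> snd p = snd q} = ?f ` (Sigma (?L \<times> ?L) ?B)"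
  proof (rule set_eqI, rule iffI)
    fix z assume "z \<in> {(p, q). p \<in> seg_idx segs \<and> q \<in> seg_idx segs \<and> snd p = snd q}"
    then obtain s j t where z: "z = ((s,j),(t,j))" "(s,j) \<in> seg_idx segs" "(t,j) \<in> seg_idx segs"
      by auto
    then have "((s,t),j) \<in> Sigma (?L \<times> ?L) ?B" by (auto simp: seg_idx_iff)
    then show "z \<in> ?f ` (Sigma (?L \<times> ?L) ?B)" using z by force
  next
    fix z assume "z \<in> ?f ` (Sigma (?L \<times> ?L) ?B)"
    then show "z \<in> {(p, q). p \<in> seg_idx segs \<and> q \<in> seg_idx segs \<and> snd p = snd q}"
      by (auto simp: seg_idx_iff)
  qed
  have inj: "inj_on ?f (Sigma (?L \<times> ?L) ?B)"
    by (rule inj_onI) auto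
  have "card (Sigma (?L \<times> ?L) ?B) = (\<Sum>st\<in>?L \<times> ?L. card (?B st))"
    by (rule card_SigmaI) auto
  also have "\<dots> = (\<Sum>st\<in>?L \<times> ?L. ov (segs!fst st) (segs!snd st))"
    by (simp add: ov_def)
  also have "\<dots> = (\<Sum>s<length segs. \<Sum>t<length segs. ov (segs!s) (segs!t))"
    by (simp add: sum.cartesian_product case_prod_beta)
  finally show ?thesis using eq card_image[OF inj] by simp
qed

lemma card_Hset: "card (Hset segs) = (\<Sum>s<length segs. \<Sum>t<length segs. if homr (segs!s) (segs!t) then 1 else 0)"
proof -
  have "Hset segs = {st \<in> {..<length segs} \<times> {..<length segs}. homr (segs!fst st) (segs!snd st)}"
    by (auto simp: Hset_def)
  then have "card (Hset segs) = (\<Sum>st\<in>{..<length segs} \<times> {..<length segs}. if homr (segs!fst st) (segs!snd st) then 1 else 0)"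
    using sum.inter_filter[of "{..<length segs} \<times> {..<length segs}" "\<lambda>_. (1::nat)" "\<lambda>st. homr (segs!fst st) (segs!snd st)"]
    by simp
  then show ?thesis by (simp add: sum.cartesian_product case_prod_beta)
qed

lemma homr_ov: "homr x y \<Longrightarrow> 1 \<le> ov x y"
proof -
  assume h: "homr x y"
  then have "fst x \<in> {fst x..snd x} \<inter> {fst y..snd y}" by (auto simp: homr_def)
  then have "{fst x..snd x} \<inter> {fst y..snd y} \<noteq> {}" by blast
  then show ?thesis unfolding ov_def by (simp add: Suc_leI card_gt_0_iff)
qed

lemma int_if: "int (if P then 1 else 0) = (if P then 1 else 0)" by simp

lemma orbit_dim_list_formula:
  "int (orbit_dim_list segs) = (\<Sum>s<length segs. \<Sum>t<length segs. gg (segs!s) (segs!t))"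
proof -
  have le: "card (Hset segs) \<le> (\<Sum>s<length segs. \<Sum>t<length segs. ov (segs!s) (segs!t))"
    unfolding card_Hset by (intro sum_mono) (auto dest: homr_ov)
  have "int (orbit_dim_list segs) = int (\<Sum>s<length segs. \<Sum>t<length segs. ov (segs!s) (segs!t)) - int (card (Hset segs))"
    unfolding orbit_dim_list_def dim_cent card_total using le by simp
  also have "\<dots> = (\<Sum>s<length segs. \<Sum>t<length segs. gg (segs!s) (segs!t))"
    unfolding card_Hset gg_def by (simp add: sum_subtractf of_nat_sum int_if)
  finally show ?thesis .
qed



lemma sum_perm: "x permutes S \<Longrightarrow> (\<Sum>j\<in>S. f (x j)) = (\<Sum>j\<in>S. f j)"
  by (rule sum.reindex_bij_betw[OF permutes_imp_bij])

lemma sum_mset_list_nth: "(\<Sum>x\<in>#mset xs. f x) = (\<Sum>s<length xs. f (xs!s))"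
  by (simp add: sum_mset_sum_list sum_list_sum_nth atLeast0LessThan flip: mset_map)

lemma orbit_dim_formula: "int (orbit_dim M) = (\<Sum>x\<in>#M. \<Sum>y\<in>#M. gg x y)"
proof -
  define segs where "segs = (SOME segs. mset segs = M)"
  have m: "mset segs = M" unfolding segs_def by (rule someI_ex[OF ex_mset])
  have "int (orbit_dim M) = (\<Sum>s<length segs. \<Sum>t<length segs. gg (segs!s) (segs!t))"
    by (simp add: orbit_dim_def segs_def[symmetric] orbit_dim_list_formula)
  also have "\<dots> = (\<Sum>x\<in>#M. \<Sum>y\<in>#M. gg x y)"
    by (simp add: m[symmetric] sum_mset_list_nth)
  finally show ?thesis .
qed

lemma sum_mset_upt: "(\<Sum>x\<in>#image_mset g (mset [0..<k]). F x) = (\<Sum>i<k. F (g i))"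
proof -
  have "image_mset g (mset [0..<k]) = mset (map g [0..<k])" by (rule mset_map[symmetric])
  then have "(\<Sum>x\<in>#image_mset g (mset [0..<k]). F x) = (\<Sum>s<length (map g [0..<k]). F (map g [0..<k] ! s))"
    by (simp only: sum_mset_list_nth)
  also have "\<dots> = (\<Sum>i<k. F (g i))"
    by (rule sum.cong) auto
  finally show ?thesis .
qed

lemma multiseg_formula:
  assumes "\<forall>i<k. a i \<le> b (x i)"
  shows "int (orbit_dim (multiseg a b k x)) = (\<Sum>i<k. \<Sum>j<k. gg (a i, b (x i)) (a j, b (x j)))"
proof -
  have "multiseg a b k x = image_mset (\<lambda>i. (a i, b (x i))) (mset [0..<k])"
    unfolding multiseg_def using assms by (subst filter_mset_eq_conv[THEN iffD2]) auto
  then show ?thesis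
    by (simp only: orbit_dim_formula sum_mset_upt)
qed

lemma sum_div_block: "(\<Sum>i<m*k. f (i div m)) = of_nat m * (\<Sum>q<k. f q :: int)"
proof -
  have "(\<Sum>i<k*m. f (i div m)) = (\<Sum>q<k. \<Sum>i\<in>{q*m..<q*m+m}. f (i div m))"
    by (rule sum.nat_group[symmetric])
  also have "\<dots> = (\<Sum>q<k. of_nat m * f q)"
  proof (rule sum.cong[OF refl])
    fix q
    have "(\<Sum>i\<in>{q*m..<q*m+m}. f (i div m)) = (\<Sum>i\<in>{q*m..<q*m+m}. f q)"
    proof (rule sum.cong[OF refl])
      fix i assume "i \<in> {q*m..<q*m+m}"
      then have "i div m = q"
        by (metis atLeastLessThan_iff div_nat_eqI mult.commute plus_1_eq_Suc add.commute mult_Suc_right)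
      then show "f (i div m) = f q" by simp
    qed
    then show "(\<Sum>i\<in>{q*m..<q*m+m}. f (i div m)) = of_nat m * f q" by simp
  qed
  finally show ?thesis by (simp add: mult.commute sum_distrib_left)
qed

lemma rep_formula:
  assumes "\<forall>i<k. a i \<le> b (x i)" and m: "m \<ge> 1"
  shows "int (orbit_dim (multiseg (rep m a) (rep m b) (m*k) (rm m x)))
     = int (m^2) * (\<Sum>i<k. \<Sum>j<k. gg (a i, b (x i)) (a j, b (x j)))"
proof -
  have rb: "rep m b (rm m x i) = b (x (i div m))" for i
    using m by (simp add: rep_def rm_def)
  have lt: "i < m*k \<Longrightarrow> i div m < k" for i
    by (simp add: less_mult_imp_div_less mult.commute)
  have P: "\<forall>i<m*k. rep m a i \<le> rep m b (rm m x i)"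
    using assms(1) lt unfolding rb by (simp add: rep_def)
  have "int (orbit_dim (multiseg (rep m a) (rep m b) (m*k) (rm m x)))
      = (\<Sum>i<m*k. \<Sum>j<m*k. gg (a (i div m), b (x (i div m))) (a (j div m), b (x (j div m))))"
    using multiseg_formula[of "m*k" "rep m a" "rep m b" "rm m x", OF P] unfolding rb by (simp add: rep_def)
  also have "\<dots> = (\<Sum>i<m*k. of_nat m * (\<Sum>j<k. gg (a (i div m), b (x (i div m))) (a j, b (x j))))"
    by (simp add: sum_div_block[where f="\<lambda>j. gg (a _, b (x _)) (a j, b (x j))"])
  also have "\<dots> = of_nat m * (\<Sum>i<k. of_nat m * (\<Sum>j<k. gg (a i, b (x i)) (a j, b (x j))))"
    by (rule sum_div_block)
  finally show ?thesis by (simp add: power2_eq_square sum_distrib_left mult.assoc)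
qed

lemma ov_formula:
  assumes "a \<le> b + 1" "c \<le> d + 1"
  shows "int (ov (a,b) (c,d)) = - max a c + max a (d+1) + max (b+1) c - max (b+1) (d+1)"
proof -
  have "{a..b} \<inter> {c..d} = {max a c..min b d}" by auto
  then have "int (ov (a,b) (c,d)) = int (nat (min b d - max a c + 1))" by (simp add: ov_def)
  then show ?thesis using assms by (auto simp: max_def min_def)
qed

lemma double_sum_perm:
  fixes A1 A2 A3 A4 :: "nat \<Rightarrow> nat \<Rightarrow> int"
  assumes x: "x permutes {..<k}"
  shows "(\<Sum>i<k. \<Sum>j<k. A1 i j + A2 i (x j) + A3 (x i) j + A4 (x i) (x j))
       = (\<Sum>i<k. \<Sum>j<k. A1 i j + A2 i j + A3 i j + A4 i j)"
proof -
  have 2: "(\<Sum>i<k. \<Sum>j<k. A2 i (x j)) = (\<Sum>i<k. \<Sum>j<k. A2 i j)"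
    by (rule sum.cong[OF refl]) (rule sum_perm[OF x])
  have 3: "(\<Sum>i<k. \<Sum>j<k. A3 (x i) j) = (\<Sum>i<k. \<Sum>j<k. A3 i j)"
    by (rule sum_perm[OF x, where f="\<lambda>i. \<Sum>j<k. A3 i j"])
  have 4: "(\<Sum>i<k. \<Sum>j<k. A4 (x i) (x j)) = (\<Sum>i<k. \<Sum>j<k. A4 i j)"
  proof -
    have "(\<Sum>i<k. \<Sum>j<k. A4 (x i) (x j)) = (\<Sum>i<k. \<Sum>j<k. A4 (x i) j)"
      by (rule sum.cong[OF refl]) (rule sum_perm[OF x])
    also have "\<dots> = (\<Sum>i<k. \<Sum>j<k. A4 i j)"
      by (rule sum_perm[OF x, where f="\<lambda>i. \<Sum>j<k. A4 i j"])
    finally show ?thesis .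
  qed
  show ?thesis using 2 3 4 by (simp add: sum.distrib)
qed

lemma perm_length_sum:
  "int (perm_length k x) = (\<Sum>i<k. \<Sum>j<k. if j < i \<and> x i < x j then 1 else 0)"
proof -
  have "{(i, j). i < j \<and> j < k \<and> x j < x i} = {z \<in> {..<k} \<times> {..<k}. fst z < snd z \<and> x (snd z) < x (fst z)}"
    by auto
  then have "perm_length k x = (\<Sum>z\<in>{..<k} \<times> {..<k}. if fst z < snd z \<and> x (snd z) < x (fst z) then 1 else 0)"
    unfolding perm_length_def
    using sum.inter_filter[of "{..<k} \<times> {..<k}" "\<lambda>_. (1::nat)" "\<lambda>z. fst z < snd z \<and> x (snd z) < x (fst z)"]
    by simp
  also have "\<dots> = (\<Sum>i<k. \<Sum>j<k. if i < j \<and> x j < x i then 1 else 0)"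
    by (simp add: sum.cartesian_product case_prod_beta)
  also have "\<dots> = (\<Sum>j<k. \<Sum>i<k. if i < j \<and> x j < x i then 1 else 0)"
    by (rule sum.swap)
  finally show ?thesis by (simp add: of_nat_sum int_if)
qed

lemma hom_point:
  fixes a b :: "nat \<Rightarrow> int" and x :: "nat \<Rightarrow> nat" and k i j :: nat
  assumes amono: "\<forall>i j. i < j \<and> j < k \<longrightarrow> a i < a j"
    and bmono: "\<forall>i j. i < j \<and> j < k \<longrightarrow> b j < b i"
    and P: "\<forall>i<k. a i \<le> b (x i)"
    and x: "x permutes {..<k}"
    and ij: "i < k" "j < k"
  shows "(if homr (a i, b (x i)) (a j, b (x j)) then 1 else 0) + (if b (x j) < a i then 1 else 0)
    = (if i = j then 1 else 0) + (if j < i \<and> x i < x j then 1 else (0::int))"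
proof -
  have xk: "x i < k" "x j < k" using permutes_in_image[OF x] ij by auto
  have xne: "i \<noteq> j \<Longrightarrow> x i \<noteq> x j" using permutes_inj[OF x] by (auto simp: inj_def)
  have Pi: "a i \<le> b (x i)" "a j \<le> b (x j)" using P ij by auto
  show ?thesis
  proof (cases "i = j")
    case True then show ?thesis using Pi by (auto simp: homr_def)
  next
    case False
    then have "j < i \<or> i < j" by auto
    then show ?thesis
    proof
      assume ji: "j < i"
      then have aij: "a j < a i" using amono ij by auto
      show ?thesis
      proof (cases "x i < x j")
        case True
        then have "b (x j) < b (x i)" using bmono xk by auto
        then show ?thesis using True ji aij False by (auto simp: homr_def)
      next
        case f2: False
        then have "x j < x i" using xne False by (meson linorder_neqE_nat)
        then have "b (x i) < b (x j)" using bmono xk by auto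
        then show ?thesis using f2 ji aij False Pi by (auto simp: homr_def)
      qed
    next
      assume ij': "i < j"
      then have aij: "a i < a j" using amono ij by auto
      then show ?thesis using ij' False Pi by (auto simp: homr_def)
    qed
  qed
qed

definition Kc :: "(nat \<Rightarrow> int) \<Rightarrow> (nat \<Rightarrow> int) \<Rightarrow> nat \<Rightarrow> int" where
  "Kc a b k = (\<Sum>i<k. \<Sum>j<k. - max (a i) (a j) + max (a i) (b j + 1) + max (b i + 1) (a j) - max (b i + 1) (b j + 1))
     - int k + (\<Sum>i<k. \<Sum>j<k. if b j < a i then 1 else 0)"

lemma W_invariant:
  fixes a b :: "nat \<Rightarrow> int" and x :: "nat \<Rightarrow> nat" and k :: nat
  assumes amono: "\<forall>i j. i < j \<and> j < k \<longrightarrow> a i < a j"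
    and bmono: "\<forall>i j. i < j \<and> j < k \<longrightarrow> b j < b i"
    and P: "\<forall>i<k. a i \<le> b (x i)"
    and x: "x permutes {..<k}"
  shows "(\<Sum>i<k. \<Sum>j<k. gg (a i, b (x i)) (a j, b (x j))) + int (perm_length k x) = Kc a b k"
proof -
  have xk: "i < k \<Longrightarrow> x i < k" for i using permutes_in_image[OF x] by auto
  define A1 where "A1 = (\<lambda>i j. - max (a i) (a j))"
  define A2 where "A2 = (\<lambda>i j. max (a i) (b j + 1))"
  define A3 where "A3 = (\<lambda>i j. max (b i + 1) (a j))"
  define A4 where "A4 = (\<lambda>i j. - max (b i + 1) (b j + 1))"
  have OV: "(\<Sum>i<k. \<Sum>j<k. int (ov (a i, b (x i)) (a j, b (x j))))
      = (\<Sum>i<k. \<Sum>j<k. A1 i j + A2 i (x j) + A3 (x i) j + A4 (x i) (x j))"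
  proof (intro sum.cong refl)
    fix i j assume "i \<in> {..<k}" "j \<in> {..<k}"
    then have "a i \<le> b (x i) + 1" "a j \<le> b (x j) + 1" using P by auto
    then show "int (ov (a i, b (x i)) (a j, b (x j))) = A1 i j + A2 i (x j) + A3 (x i) j + A4 (x i) (x j)"
      by (simp add: ov_formula A1_def A2_def A3_def A4_def)
  qed
  also have "\<dots> = (\<Sum>i<k. \<Sum>j<k. A1 i j + A2 i j + A3 i j + A4 i j)"
    by (rule double_sum_perm[OF x])
  finally have OV': "(\<Sum>i<k. \<Sum>j<k. int (ov (a i, b (x i)) (a j, b (x j))))
      = (\<Sum>i<k. \<Sum>j<k. - max (a i) (a j) + max (a i) (b j + 1) + max (b i + 1) (a j) - max (b i + 1) (b j + 1))"
    by (simp add: A1_def A2_def A3_def A4_def)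
  have HB: "(\<Sum>i<k. \<Sum>j<k. (if homr (a i, b (x i)) (a j, b (x j)) then 1 else 0) + (if b (x j) < a i then 1 else 0))
      = (\<Sum>i<k. \<Sum>j<k. (if i = j then 1 else 0) + (if j < i \<and> x i < x j then 1 else (0::int)))"
    by (intro sum.cong refl) (use hom_point[OF amono bmono P x] in auto)
  have BS: "(\<Sum>i<k. \<Sum>j<k. (if b (x j) < a i then 1 else (0::int))) = (\<Sum>i<k. \<Sum>j<k. if b j < a i then 1 else 0)"
    by (rule sum.cong[OF refl]) (rule sum_perm[OF x, where f="\<lambda>j. if b j < a _ then 1 else (0::int)"])
  have D: "(\<Sum>i<k. \<Sum>j<k. (if i = j then 1 else (0::int))) = int k"
    by simp
  show ?thesis
    using OV' HB BS D unfolding gg_def Kc_def perm_length_sum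
    by (simp add: sum.distrib sum_subtractf)
qed



lemma length_swap_le:
  fixes x :: "nat \<Rightarrow> nat"
  assumes ij: "i < j" "j < k" and xji: "x j < x i"
  shows "perm_length k (x \<circ> transpose i j) \<le> perm_length k x"
proof -
  let ?t = "transpose i j"
  let ?y = "x \<circ> ?t"
  let ?Iy = "{(p, q). p < q \<and> q < k \<and> ?y q < ?y p}"
  let ?Ix = "{(p, q). p < q \<and> q < k \<and> x q < x p}"
  define \<phi> where "\<phi> = (\<lambda>(p,q). if (p = i \<and> i < q \<and> q < j) \<or> (q = j \<and> i < p \<and> p < j) then (p,q) else (?t p, ?t q))"
  have fin: "finite ?Ix"
    by (rule finite_subset[of _ "{..<k} \<times> {..<k}"]) auto
  have into: "\<phi> ` ?Iy \<subseteq> ?Ix"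
  proof
    fix z assume "z \<in> \<phi> ` ?Iy"
    then obtain p q where pq: "p < q" "q < k" "?y q < ?y p" and z: "z = \<phi> (p,q)" by auto
    show "z \<in> ?Ix"
    proof (cases "(p = i \<and> i < q \<and> q < j) \<or> (q = j \<and> i < p \<and> p < j)")
      case True
      then show ?thesis using pq ij xji by (auto simp: z \<phi>_def transpose_def)
    next
      case False
      have "(p,q) \<noteq> (i,j)" using pq xji by auto
      then show ?thesis using False pq ij by (auto simp: z \<phi>_def transpose_def split: if_splits)
    qed
  qed
  have inj: "inj_on \<phi> ?Iy"
  proof (rule inj_onI)
    fix z1 z2 assume z1: "z1 \<in> ?Iy" and z2: "z2 \<in> ?Iy" and e: "\<phi> z1 = \<phi> z2"
    obtain p q p' q' where zz: "z1 = (p,q)" "z2 = (p',q')" by (cases z1, cases z2)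
    show "z1 = z2" using z1 z2 e ij by (auto simp: zz \<phi>_def transpose_def split: if_splits)
  qed
  show ?thesis unfolding perm_length_def
    by (rule card_inj_on_le[OF inj into fin])
qed

lemma step_P:
  fixes a b :: "nat \<Rightarrow> int"
  assumes bs: "biseq a b k" and st: "(x, y) \<in> bruhat_step k"
    and P: "\<forall>i<k. a i \<le> b (x i) + 1"
  shows "\<forall>i<k. a i \<le> b (y i) + 1"
proof -
  from st obtain i j where x: "x permutes {..<k}" and ij: "i < k" "j < k" "i \<noteq> j"
    and y: "y = x \<circ> transpose i j" and l: "perm_length k x < perm_length k (x \<circ> transpose i j)"
    by (auto simp: bruhat_step_def)
  have amono: "\<And>i j. i \<le> j \<Longrightarrow> j < k \<Longrightarrow> a i \<le> a j" and bmono: "\<And>i j. i \<le> j \<Longrightarrow> j < k \<Longrightarrow> b j \<le> b i"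
    using bs by (auto simp: biseq_def)
  have xk: "i < k \<Longrightarrow> x i < k" for i using permutes_in_image[OF x] by auto
  have inj: "inj x" using permutes_inj[OF x] .
  have main: "\<forall>l<k. a l \<le> b ((x \<circ> transpose i' j') l) + 1"
    if ij': "i' < j'" "j' < k" and l': "perm_length k x < perm_length k (x \<circ> transpose i' j')" for i' j'
  proof -
    have "\<not> x j' < x i'" using length_swap_le[OF ij', of x] l' by auto
    moreover have "x j' \<noteq> x i'" using inj ij' by (auto dest: injD)
    ultimately have xl: "x i' < x j'" by auto
    then have bb: "b (x j') \<le> b (x i')" using bmono xk ij' by auto
    show ?thesis
    proof (intro allI impI)
      fix l assume lk: "l < k"
      show "a l \<le> b ((x \<circ> transpose i' j') l) + 1"
      proof (cases "l = i'")
        case True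
        then show ?thesis using amono[of i' j'] P ij' by (auto simp: transpose_def)
      next
        case f: False
        show ?thesis
        proof (cases "l = j'")
          case True
          then show ?thesis using P bb ij' by (auto simp: transpose_def)
        next
          case False
          then show ?thesis using f P lk by (auto simp: transpose_def)
        qed
      qed
    qed
  qed
  show ?thesis
  proof (cases "i < j")
    case True
    then show ?thesis using main[OF True ij(2) l] y by simp
  next
    case False
    then have "j < i" using ij by auto
    moreover have "transpose i j = transpose j i" by (rule transpose_commute)
    ultimately show ?thesis using main[of j i] ij l y by simp
  qed
qed

lemma bruhat_P:
  fixes a b :: "nat \<Rightarrow> int"
  assumes bs: "biseq a b k" and le: "bruhat_le k x y"
    and P: "\<forall>i<k. a i \<le> b (x i) + 1"
  shows "\<forall>i<k. a i \<le> b (y i) + 1"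
  using le[unfolded bruhat_le_def] P
proof (induction rule: rtrancl_induct)
  case base then show ?case by simp
next
  case (step y z) then show ?case using step_P[OF bs] by blast
qed

lemma sel_props:
  fixes a b :: "nat \<Rightarrow> int"
  assumes bs: "biseq a b k"
  shows "n \<le> k \<Longrightarrow> length (sel a b k n) = n \<and> distinct (sel a b k n) \<and> set (sel a b k n) \<subseteq> {..<k}
     \<and> (\<forall>p<n. a (sel a b k n ! p) \<le> b (k - 1 - p) + 1)"
proof (induction n)
  case 0 then show ?case by simp
next
  case (Suc n)
  let ?L = "sel a b k n"
  let ?i = "k - Suc n"
  let ?S = "{j. j < k \<and> j \<notin> set ?L \<and> a j \<le> b ?i + 1}"
  from Suc have IH: "length ?L = n" "distinct ?L" "set ?L \<subseteq> {..<k}"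
      "\<forall>p<n. a (?L ! p) \<le> b (k - 1 - p) + 1" by auto
  have amono: "\<And>i j. i \<le> j \<Longrightarrow> j < k \<Longrightarrow> a i \<le> a j" using bs by (auto simp: biseq_def)
  have ab: "\<forall>i<k. a i \<le> b (k - 1 - i) + 1" using bs by (auto simp: biseq_def)
  have "card (set ?L) = n" using IH distinct_card by metis
  then have "\<not> {0..n} \<subseteq> set ?L"
  proof -
    assume cn: "card (set ?L) = n"
    show ?thesis
    proof
      assume "{0..n} \<subseteq> set ?L"
      then have "card {0..n} \<le> card (set ?L)" by (rule card_mono[rotated]) simp
      then show False using cn by simp
    qed
  qed
  then obtain j where j0: "j \<in> {0..n}" "j \<notin> set ?L" by blast
  then have j: "j \<le> n" "j \<notin> set ?L" by auto
  have "k - 1 - ?i = n" using Suc.prems by auto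
  then have "a n \<le> b ?i + 1" using ab[rule_format, of n] Suc.prems by auto
  then have "j \<in> ?S" using j amono[of j n] Suc.prems by auto
  then have ne: "?S \<noteq> {}" by blast
  have fin: "finite ?S" by auto
  have M: "Max ?S \<in> ?S" using Max_in[OF fin ne] .
  have eq: "sel a b k (Suc n) = ?L @ [Max ?S]" by (simp add: Let_def)
  show ?case
  proof (intro conjI allI impI)
    show "length (sel a b k (Suc n)) = Suc n" using eq IH by simp
    show "distinct (sel a b k (Suc n))" using eq IH M by simp
    show "set (sel a b k (Suc n)) \<subseteq> {..<k}" using eq IH M by auto
    fix p assume p: "p < Suc n"
    show "a (sel a b k (Suc n) ! p) \<le> b (k - 1 - p) + 1"
    proof (cases "p < n")
      case True then show ?thesis using eq IH by (simp add: nth_append)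
    next
      case False
      then have "p = n" using p by auto
      moreover have "k - Suc n = k - 1 - n" by simp
      ultimately show ?thesis using eq IH M by (simp add: nth_append)
    qed
  qed
qed

lemma sigma0_P:
  fixes a b :: "nat \<Rightarrow> int"
  assumes bs: "biseq a b k"
  shows "\<forall>j<k. a j \<le> b (sigma0 a b k j) + 1"
proof (intro allI impI)
  fix j assume jk: "j < k"
  let ?L = "sel a b k k"
  have L: "length ?L = k" "distinct ?L" "set ?L \<subseteq> {..<k}" "\<forall>p<k. a (?L ! p) \<le> b (k - 1 - p) + 1"
    using sel_props[OF bs, of k] by auto
  have "card (set ?L) = k" using L distinct_card by metis
  then have "set ?L = {..<k}" using L(3) by (simp add: card_subset_eq)
  then have "j \<in> set ?L" using jk by auto
  then obtain p where p: "p < k" "?L ! p = j" using L(1) by (auto simp: in_set_conv_nth)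
  define i where "i = k - 1 - p"
  have ik: "i < k" and pi: "k - 1 - i = p" using p jk by (auto simp: i_def)
  have inv: "sigma0_inv a b k i = j" using ik pi p by (simp add: sigma0_inv_def)
  have uniq: "i' = i" if "i' < k" "sigma0_inv a b k i' = j" for i'
  proof -
    have "?L ! (k - 1 - i') = ?L ! p" using that p by (simp add: sigma0_inv_def)
    moreover have "k - 1 - i' < length ?L" using L(1) that by simp
    ultimately have "k - 1 - i' = p" using nth_eq_iff_index_eq[OF L(2), of "k - 1 - i'" p] L(1) p by simp
    then show ?thesis using that p by (simp add: i_def)
  qed
  have "(THE i'. i' < k \<and> sigma0_inv a b k i' = j) = i"
  proof (rule the_equality)
    show "i < k \<and> sigma0_inv a b k i = j" using ik inv by blast
    show "\<And>i'. i' < k \<and> sigma0_inv a b k i' = j \<Longrightarrow> i' = i" using uniq by blast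
  qed
  then have s0: "sigma0 a b k j = i" using jk unfolding sigma0_def by simp
  have "a (?L ! p) \<le> b (k - 1 - p) + 1" using L(4) p(1) by blast
  then have "a j \<le> b i + 1" unfolding p(2) i_def .
  then show "a j \<le> b (sigma0 a b k j) + 1" unfolding s0 .
qed


theorem mainTheorem4:
  fixes a b :: "nat \<Rightarrow> int" and k m :: nat and \<sigma> \<omega> :: "nat \<Rightarrow> nat"
  assumes "strongly_regular_biseq a b k"
    and "\<sigma> permutes {..<k}" and "\<omega> permutes {..<k}"
    and "bruhat_le k (sigma0 a b k) \<sigma>" and "bruhat_le k \<sigma> \<omega>"
    and "m \<ge> 1"
  shows "c_val (rm m \<sigma>) (rm m \<omega>) (rep m a) (rep m b) (m * k)
           = int (m ^ 2) * (int (perm_length k \<omega>) - int (perm_length k \<sigma>))"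
proof -
  note srb = assms(1)
  have bs: "biseq a b k" and ia: "inj_on a {..<k}" and ib: "inj_on b {..<k}"
    and sr: "\<forall>i<k. \<forall>j<k. a i \<noteq> b j + 1"
    using srb by (auto simp: strongly_regular_biseq_def regular_biseq_def)
  have amono: "\<forall>i j. i < j \<and> j < k \<longrightarrow> a i < a j"
  proof (intro allI impI)
    fix i j :: nat assume h: "i < j \<and> j < k"
    then have "a i \<le> a j" using bs by (auto simp: biseq_def)
    moreover have "a i \<noteq> a j" using h ia by (auto dest: inj_onD)
    ultimately show "a i < a j" by simp
  qed
  have bmono: "\<forall>i j. i < j \<and> j < k \<longrightarrow> b j < b i"
  proof (intro allI impI)
    fix i j :: nat assume h: "i < j \<and> j < k"
    then have "b j \<le> b i" using bs by (auto simp: biseq_def)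
    moreover have "b i \<noteq> b j" using h ib by (auto dest: inj_onD)
    ultimately show "b j < b i" by simp
  qed
  have P0: "\<forall>i<k. a i \<le> b (sigma0 a b k i) + 1" by (rule sigma0_P[OF bs])
  have Ps': "\<forall>i<k. a i \<le> b (\<sigma> i) + 1" by (rule bruhat_P[OF bs assms(4) P0])
  have Pw': "\<forall>i<k. a i \<le> b (\<omega> i) + 1" by (rule bruhat_P[OF bs assms(5) Ps'])
  have strict: "\<forall>i<k. a i \<le> b (x i)" if x: "x permutes {..<k}" and Px: "\<forall>i<k. a i \<le> b (x i) + 1" for x
  proof (intro allI impI)
    fix i assume ik: "i < k"
    then have "x i < k" using permutes_in_image[OF x] by auto
    then have "a i \<noteq> b (x i) + 1" using sr ik by auto
    then show "a i \<le> b (x i)" using Px ik by force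
  qed
  have Ps: "\<forall>i<k. a i \<le> b (\<sigma> i)" by (rule strict[OF assms(2) Ps'])
  have Pw: "\<forall>i<k. a i \<le> b (\<omega> i)" by (rule strict[OF assms(3) Pw'])
  have Ws: "(\<Sum>i<k. \<Sum>j<k. gg (a i, b (\<sigma> i)) (a j, b (\<sigma> j))) + int (perm_length k \<sigma>) = Kc a b k"
    by (rule W_invariant[OF amono bmono Ps assms(2)])
  have Ww: "(\<Sum>i<k. \<Sum>j<k. gg (a i, b (\<omega> i)) (a j, b (\<omega> j))) + int (perm_length k \<omega>) = Kc a b k"
    by (rule W_invariant[OF amono bmono Pw assms(3)])
  have Rs: "int (orbit_dim (multiseg (rep m a) (rep m b) (m*k) (rm m \<sigma>)))
     = int (m^2) * (\<Sum>i<k. \<Sum>j<k. gg (a i, b (\<sigma> i)) (a j, b (\<sigma> j)))"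
    by (rule rep_formula[of k a b \<sigma> m, OF Ps assms(6)])
  have Rw: "int (orbit_dim (multiseg (rep m a) (rep m b) (m*k) (rm m \<omega>)))
     = int (m^2) * (\<Sum>i<k. \<Sum>j<k. gg (a i, b (\<omega> i)) (a j, b (\<omega> j)))"
    by (rule rep_formula[of k a b \<omega> m, OF Pw assms(6)])
  have "c_val (rm m \<sigma>) (rm m \<omega>) (rep m a) (rep m b) (m * k)
      = int (m^2) * (\<Sum>i<k. \<Sum>j<k. gg (a i, b (\<sigma> i)) (a j, b (\<sigma> j)))
        - int (m^2) * (\<Sum>i<k. \<Sum>j<k. gg (a i, b (\<omega> i)) (a j, b (\<omega> j)))"
    unfolding c_val_def Rs Rw ..
  also have "\<dots> = int (m ^ 2) * (int (perm_length k \<omega>) - int (perm_length k \<sigma>))"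
  proof -
    have d: "(\<Sum>i<k. \<Sum>j<k. gg (a i, b (\<sigma> i)) (a j, b (\<sigma> j)))
        - (\<Sum>i<k. \<Sum>j<k. gg (a i, b (\<omega> i)) (a j, b (\<omega> j)))
        = int (perm_length k \<omega>) - int (perm_length k \<sigma>)"
      using Ws Ww by linarith
    show ?thesis unfolding right_diff_distrib[symmetric] d ..
  qed
  finally show ?thesis .
qed

end
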